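(* Let $\mathcal A=(Q,q_0,\{a,b\},\delta,F)$ be a probabilistic automaton with $q_0\notin F$, and let $\mathcal D$ be the MDP constructed from $\mathcal A$ as described in the context, with $s_1=a$ and $s_2=(a,q_0)$. Then for every general strategy $\alpha$ for $\mathcal D$, \[ d_\alpha(s_1,s_2)=\sum_{w\in\{a,b\}^*}\frac{1}{3^{|w|+1}}\Big(\big(1-\Pr_{\mathcal A}(w)\big)\,\alpha(s_1w\$)({\sf m}_y)+\Pr_{\mathcal A}(w)\,\alpha(s_1w\$)({\sf m}_x)\Big), \] where $d_\alpha$ denotes the probabilistic bisimilarity distance in the LMC $\mathcal D(\alpha)$ and, for $w=\sigma_1\cdots\sigma_n$, $s_1w\$$ denotes the path $a\,{\sf m}\,\sigma_1\,{\sf m}\,\sigma_2\cdots{\sf m}\,\sigma_n\,{\sf m}\,\$$ in $\mathcal D$.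
   Context: A probabilistic automaton is $\mathcal A=(Q,q_0,L,\delta,F)$ with finite state set $Q$, initial state $q_0$, finite alphabet $L$, $\delta:Q\times L\to\mathrm{Distr}(Q)$, and final states $F\subseteq Q$; $\delta$ extends to words by $\delta(q,\varepsilon)=\mathbf 1_q$ and $\delta(q,\sigma w)=\sum_{q'}\delta(q,\sigma)(q')\delta(q',w)$, and $\Pr_{\mathcal A}(w)=\sum_{q\in F}\delta(q_0,w)(q)$. An MDP is $(S,Act,L,\varphi,\ell)$ with finite $S,Act,L$, partial $\varphi:S\times Act\rightharpoonup\mathrm{Distr}(S)$ and labelling $\ell$; a path is $s_0{\sf m}_1s_1\cdots{\sf m}_ns_n$ with $\varphi(s_i,{\sf m}_{i+1})(s_{i+1})>0$; a general strategy maps each path to a distribution over the actions available at its last state; it induces the LMC $\mathcal D(\alpha)$ whose states are paths, with $\tau(\rho)(\rho{\sf m}t)=\alpha(\rho)({\sf m})\varphi({\sf last}(\rho),{\sf m})(t)$ and label of $\rho$ equal to the label of its last state (a state $s$ is identified with the one-state path $s$). The probabilistic bisimilarity distance of an LMC $(S,L,\tau,\ell)$ is the least fixed point of $\Delta(e)(s,t)=1$ if $\ell(s)\neq\ell(t)$, else $\min_{\omega}\sum_{u,v}\omega(u,v)e(u,v)$ over couplings $\omega\in\mathrm{Distr}(S\times S)$ with marginals $\tau(s),\tau(t)$. Construction of $\mathcal D$: actions $\{{\sf m},{\sf m}_x,{\sf m}_y\}$, labels $\{a,b,\$,x,y\}$; two disjoint parts. Part 1 has states $a,b,\$,x,y$,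 each labelled by its own name; $a$ and $b$ each have only action ${\sf m}$ going to each of $a,b,\$$ with probability $1/3$; $\$$ has actions ${\sf m}_x$ (to $x$ with probability 1) and ${\sf m}_y$ (to $y$ with probability 1); $x,y$ are sinks (action ${\sf m}$). Part 2 has states $(\sigma,q)$ for $\sigma\in\{a,b\}$, $q\in Q$, labelled $\sigma$, and states $\$_x,\$_y$ (labelled $\$$), $x'$ (labelled $x$), $y'$ (labelled $y$), all with only action ${\sf m}$: $(\sigma,q)$ goes to $(a,q')$ with probability $\frac13\delta(q,a)(q')$, to $(b,q')$ with probability $\frac13\delta(q,b)(q')$, and with probability $\frac13$ to $\$_x$ if $q\notin F$ and to $\$_y$ if $q\in F$; $\$_x\to x'$, $\$_y\to y'$ with probability 1; $x',y'$ are sinks. *)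

theory Defs
  imports "HOL-Probability.Probability"
begin

datatype letter = La | Lb

fun delta_word :: "('q \<Rightarrow> letter \<Rightarrow> 'q pmf) \<Rightarrow> 'q \<Rightarrow> letter list \<Rightarrow> 'q pmf" where
  "delta_word \<delta> q [] = return_pmf q"
| "delta_word \<delta> q (\<sigma> # w) = bind_pmf (\<delta> q \<sigma>) (\<lambda>q'. delta_word \<delta> q' w)"

definition PA_Pr :: "'q \<Rightarrow> ('q \<Rightarrow> letter \<Rightarrow> 'q pmf) \<Rightarrow> 'q set \<Rightarrow> letter list \<Rightarrow> real" where
  "PA_Pr q0 \<delta> F w = (\<Sum>q\<in>F. pmf (delta_word \<delta> q0 w) q)"

text \<open>An MDP is given by a partial transition function phi and a labelling ell.
  A path s0 m1 s1 ... mn sn is represented as (s0, [(m1,s1),...,(mn,sn)]).\<close>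

type_synonym ('s, 'act) path = "'s \<times> ('act \<times> 's) list"

definition path_last :: "('s, 'act) path \<Rightarrow> 's" where
  "path_last \<rho> = (if snd \<rho> = [] then fst \<rho> else snd (last (snd \<rho>)))"

definition path_ext :: "('s, 'act) path \<Rightarrow> 'act \<Rightarrow> 's \<Rightarrow> ('s, 'act) path" where
  "path_ext \<rho> m t = (fst \<rho>, snd \<rho> @ [(m, t)])"

fun valid_from :: "('s \<Rightarrow> 'act \<Rightarrow> 's pmf option) \<Rightarrow> 's \<Rightarrow> ('act \<times> 's) list \<Rightarrow> bool" where
  "valid_from \<phi> s [] = True"
| "valid_from \<phi> s ((m, t) # xs) =
     (case \<phi> s m of None \<Rightarrow> False | Some \<mu> \<Rightarrow> pmf \<mu> t > 0 \<and> valid_from \<phi> t xs)"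

definition is_path :: "('s \<Rightarrow> 'act \<Rightarrow> 's pmf option) \<Rightarrow> ('s, 'act) path \<Rightarrow> bool" where
  "is_path \<phi> \<rho> = valid_from \<phi> (fst \<rho>) (snd \<rho>)"

definition is_strategy ::
  "('s \<Rightarrow> 'act \<Rightarrow> 's pmf option) \<Rightarrow> (('s, 'act) path \<Rightarrow> 'act pmf) \<Rightarrow> bool" where
  "is_strategy \<phi> \<alpha> = (\<forall>\<rho>. is_path \<phi> \<rho> \<longrightarrow> set_pmf (\<alpha> \<rho>) \<subseteq> {m. \<phi> (path_last \<rho>) m \<noteq> None})"

definition strat_tau ::
  "('s \<Rightarrow> 'act \<Rightarrow> 's pmf option) \<Rightarrow> (('s, 'act) path \<Rightarrow> 'act pmf) \<Rightarrow> ('s, 'act) path \<Rightarrow> ('s, 'act) path pmf" where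
  "strat_tau \<phi> \<alpha> \<rho> =
     bind_pmf (\<alpha> \<rho>) (\<lambda>m. map_pmf (\<lambda>t. path_ext \<rho> m t) (the (\<phi> (path_last \<rho>) m)))"

definition strat_label :: "('s \<Rightarrow> 'l) \<Rightarrow> ('s, 'act) path \<Rightarrow> 'l" where
  "strat_label lbl \<rho> = lbl (path_last \<rho>)"

definition couplings :: "'a pmf \<Rightarrow> 'a pmf \<Rightarrow> ('a \<times> 'a) pmf set" where
  "couplings \<mu> \<nu> = {\<omega>. map_pmf fst \<omega> = \<mu> \<and> map_pmf snd \<omega> = \<nu>}"

definition bisim_Delta ::
  "('a \<Rightarrow> 'a pmf) \<Rightarrow> ('a \<Rightarrow> 'l) \<Rightarrow> ('a \<times> 'a \<Rightarrow> ennreal) \<Rightarrow> ('a \<times> 'a \<Rightarrow> ennreal)" where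
  "bisim_Delta \<tau> lbl e = (\<lambda>(s, t). if lbl s \<noteq> lbl t then 1
      else (INF \<omega>\<in>couplings (\<tau> s) (\<tau> t). \<integral>\<^sup>+ uv. e uv \<partial>measure_pmf \<omega>))"

definition bisim_dist :: "('a \<Rightarrow> 'a pmf) \<Rightarrow> ('a \<Rightarrow> 'l) \<Rightarrow> 'a \<Rightarrow> 'a \<Rightarrow> ennreal" where
  "bisim_dist \<tau> lbl s t = lfp (bisim_Delta \<tau> lbl) (s, t)"

datatype act = Mm | Mx | My

datatype lab = LabA | LabB | LabDollar | LabX | LabY

text \<open>Part 1: A1, B1, Dol1, X1, Y1 (the states a, b, \$, x, y).
  Part 2: Sym sigma q (the states (sigma,q)), DolX, DolY, X2 (= x'), Y2 (= y').\<close>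

datatype 'q dstate = A1 | B1 | Dol1 | X1 | Y1 | Sym letter 'q | DolX | DolY | X2 | Y2

definition letter_lab :: "letter \<Rightarrow> lab" where
  "letter_lab \<sigma> = (case \<sigma> of La \<Rightarrow> LabA | Lb \<Rightarrow> LabB)"

fun D_label :: "'q dstate \<Rightarrow> lab" where
  "D_label A1 = LabA"
| "D_label B1 = LabB"
| "D_label Dol1 = LabDollar"
| "D_label X1 = LabX"
| "D_label Y1 = LabY"
| "D_label (Sym \<sigma> q) = letter_lab \<sigma>"
| "D_label DolX = LabDollar"
| "D_label DolY = LabDollar"
| "D_label X2 = LabX"
| "D_label Y2 = LabY"

fun D_phi :: "('q \<Rightarrow> letter \<Rightarrow> 'q pmf) \<Rightarrow> 'q set \<Rightarrow> 'q dstate \<Rightarrow> act \<Rightarrow> 'q dstate pmf option" where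
  "D_phi \<delta> F A1 m = (if m = Mm then Some (pmf_of_set {A1, B1, Dol1}) else None)"
| "D_phi \<delta> F B1 m = (if m = Mm then Some (pmf_of_set {A1, B1, Dol1}) else None)"
| "D_phi \<delta> F Dol1 m = (if m = Mx then Some (return_pmf X1)
                        else if m = My then Some (return_pmf Y1) else None)"
| "D_phi \<delta> F X1 m = (if m = Mm then Some (return_pmf X1) else None)"
| "D_phi \<delta> F Y1 m = (if m = Mm then Some (return_pmf Y1) else None)"
| "D_phi \<delta> F (Sym \<sigma> q) m = (if m = Mm then Some
      (bind_pmf (pmf_of_set {Some La, Some Lb, None})
        (\<lambda>c. case c of
               Some \<sigma>' \<Rightarrow> map_pmf (Sym \<sigma>') (\<delta> q \<sigma>')
             | None \<Rightarrow> return_pmf (if q \<in> F then DolY else DolX)))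
      else None)"
| "D_phi \<delta> F DolX m = (if m = Mm then Some (return_pmf X2) else None)"
| "D_phi \<delta> F DolY m = (if m = Mm then Some (return_pmf Y2) else None)"
| "D_phi \<delta> F X2 m = (if m = Mm then Some (return_pmf X2) else None)"
| "D_phi \<delta> F Y2 m = (if m = Mm then Some (return_pmf Y2) else None)"

definition letter_state :: "letter \<Rightarrow> 'q dstate" where
  "letter_state \<sigma> = (case \<sigma> of La \<Rightarrow> A1 | Lb \<Rightarrow> B1)"

definition s1_word_dollar :: "letter list \<Rightarrow> ('q dstate, act) path" where
  "s1_word_dollar w = (A1, map (\<lambda>\<sigma>. (Mm, letter_state \<sigma>)) w @ [(Mm, Dol1)])"

end

theory Submission
  imports Defs
begin



lemma Delta_mono: "mono (bisim_Delta \<tau> lbl)"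
  unfolding mono_def le_fun_def bisim_Delta_def
  apply (auto intro!: INF_mono)
  subgoal for x y a b m by (intro bexI[of _ m] nn_integral_mono) auto
  done

lemma pair_coupling: "pair_pmf \<mu> \<nu> \<in> couplings \<mu> \<nu>"
  by (simp add: couplings_def map_fst_pair_pmf map_snd_pair_pmf)

lemma lfp_le1: "lfp (bisim_Delta \<tau> lbl) x \<le> 1"
proof -
  have "bisim_Delta \<tau> lbl (\<lambda>_. 1) \<le> (\<lambda>_. 1)"
  proof (rule le_funI)
    fix p :: "'a \<times> 'a" obtain s t where p: "p = (s,t)" by fastforce
    have "(INF \<omega>\<in>couplings (\<tau> s) (\<tau> t). \<integral>\<^sup>+ uv. 1 \<partial>measure_pmf \<omega>) \<le> \<integral>\<^sup>+ uv. 1 \<partial>measure_pmf (pair_pmf (\<tau> s) (\<tau> t))"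
      by (rule INF_lower) (rule pair_coupling)
    also have "\<dots> = 1" by simp
    finally show "bisim_Delta \<tau> lbl (\<lambda>_. 1) p \<le> 1" unfolding bisim_Delta_def p by auto
  qed
  then have "lfp (bisim_Delta \<tau> lbl) \<le> (\<lambda>_. 1)" by (rule lfp_lowerbound)
  then show ?thesis by (cases x) (simp add: le_fun_def)
qed

lemma lfp_fix: "lfp (bisim_Delta \<tau> lbl) = bisim_Delta \<tau> lbl (lfp (bisim_Delta \<tau> lbl))"
  by (rule lfp_unfold[OF Delta_mono])

lemma lfp_mismatch: "lbl s \<noteq> lbl t \<Longrightarrow> lfp (bisim_Delta \<tau> lbl) (s,t) = 1"
  by (subst lfp_fix) (simp add: bisim_Delta_def)

lemma Delta_eq_INF: "lbl s = lbl t \<Longrightarrow> bisim_Delta \<tau> lbl e (s,t) =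
   (INF \<omega>\<in>couplings (\<tau> s) (\<tau> t). \<integral>\<^sup>+ uv. e uv \<partial>measure_pmf \<omega>)"
  by (simp add: bisim_Delta_def)

lemma INF_coupling_le:
  assumes "map_pmf f \<nu> = \<mu>"
  shows "(INF \<omega>\<in>couplings \<mu> \<nu>. \<integral>\<^sup>+ uv. e uv \<partial>measure_pmf \<omega>) \<le> (\<integral>\<^sup>+ v. e (f v, v) \<partial>measure_pmf \<nu>)"
proof -
  have "map_pmf (\<lambda>v. (f v, v)) \<nu> \<in> couplings \<mu> \<nu>"
    using assms by (simp add: couplings_def pmf.map_comp o_def)
  then have "(INF \<omega>\<in>couplings \<mu> \<nu>. \<integral>\<^sup>+ uv. e uv \<partial>measure_pmf \<omega>) \<le> \<integral>\<^sup>+ uv. e uv \<partial>measure_pmf (map_pmf (\<lambda>v. (f v, v)) \<nu>)"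
    by (rule INF_lower)
  then show ?thesis by simp
qed

lemma INF_coupling_ge:
  assumes uniq: "\<And>u v. u \<in> set_pmf \<mu> \<Longrightarrow> v \<in> set_pmf \<nu> \<Longrightarrow> e (u, v) \<ge> L v"
  shows "(INF \<omega>\<in>couplings \<mu> \<nu>. \<integral>\<^sup>+ uv. e uv \<partial>measure_pmf \<omega>) \<ge> (\<integral>\<^sup>+ v. L v \<partial>measure_pmf \<nu>)"
proof (rule INF_greatest)
  fix \<omega> assume w: "\<omega> \<in> couplings \<mu> \<nu>"
  then have m1: "map_pmf fst \<omega> = \<mu>" and m2: "map_pmf snd \<omega> = \<nu>" by (auto simp: couplings_def)
  have "(\<integral>\<^sup>+ v. L v \<partial>measure_pmf \<nu>) = (\<integral>\<^sup>+ uv. L (snd uv) \<partial>measure_pmf \<omega>)"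
    by (simp flip: m2)
  also have "\<dots> \<le> (\<integral>\<^sup>+ uv. e uv \<partial>measure_pmf \<omega>)"
  proof (rule nn_integral_mono_AE, rule AE_pmfI)
    fix uv assume "uv \<in> set_pmf \<omega>"
    then have "fst uv \<in> set_pmf \<mu>" "snd uv \<in> set_pmf \<nu>"
      using m1 m2 by force+
    then show "L (snd uv) \<le> e uv" using uniq[of "fst uv" "snd uv"] by simp
  qed
  finally show "(\<integral>\<^sup>+ v. L v \<partial>measure_pmf \<nu>) \<le> (\<integral>\<^sup>+ uv. e uv \<partial>measure_pmf \<omega>)" .
qed




lemma path_last_ext[simp]: "path_last (path_ext \<rho> m t) = t"
  by (simp add: path_last_def path_ext_def)

lemma valid_from_snoc:
  "valid_from \<phi> s (xs @ [(m,t)]) = (valid_from \<phi> s xs \<and>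
     (case \<phi> (path_last (s,xs)) m of None \<Rightarrow> False | Some \<mu> \<Rightarrow> pmf \<mu> t > 0))"
proof (induction xs arbitrary: s)
  case Nil then show ?case by (simp add: path_last_def split: option.splits)
next
  case (Cons x xs)
  obtain m' t' where x: "x = (m', t')" by fastforce
  show ?case using Cons[of t'] by (auto simp: x path_last_def split: option.splits)
qed

lemma is_path_ext:
  assumes "is_path \<phi> \<rho>" "\<phi> (path_last \<rho>) m = Some \<mu>" "t \<in> set_pmf \<mu>"
  shows "is_path \<phi> (path_ext \<rho> m t)"
  using assms unfolding is_path_def path_ext_def
  by (cases \<rho>) (simp add: valid_from_snoc pmf_positive)

definition p1 :: "letter list \<Rightarrow> ('q dstate, act) path" where
  "p1 u = (A1, map (\<lambda>\<sigma>. (Mm, letter_state \<sigma>)) u)"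

lemma p1_snoc: "p1 (u @ [\<sigma>]) = path_ext (p1 u) Mm (letter_state \<sigma>)"
  by (simp add: p1_def path_ext_def)

lemma s1wd_eq: "s1_word_dollar u = path_ext (p1 u) Mm Dol1"
  by (simp add: p1_def path_ext_def s1_word_dollar_def)

lemma last_p1: "path_last (p1 u) = letter_state (last (La # u))"
  by (induction u rule: rev_induct) (auto simp: p1_def path_last_def letter_state_def)

lemma letter_state_cases: "letter_state \<sigma> = A1 \<or> letter_state \<sigma> = B1"
  by (cases \<sigma>) (auto simp: letter_state_def)

lemma label_letter_state[simp]: "D_label (letter_state \<sigma>) = letter_lab \<sigma>"
  by (cases \<sigma>) (auto simp: letter_state_def letter_lab_def)

lemma inj_letter_state: "inj letter_state"
  by (rule injI) (auto simp: letter_state_def split: letter.splits)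

lemma inj_letter_lab: "inj letter_lab"
  by (rule injI) (auto simp: letter_lab_def split: letter.splits)

lemma p1_inj: "p1 u = p1 v \<Longrightarrow> u = v"
proof -
  have "inj (\<lambda>\<sigma>. (Mm, letter_state \<sigma>))" using inj_letter_state by (auto simp: inj_def)
  moreover assume "p1 u = p1 v"
  ultimately show ?thesis unfolding p1_def by (metis inj_map_eq_map prod.inject)
qed

lemma phi_AB: "\<sigma>' = A1 \<or> \<sigma>' = B1 \<Longrightarrow> D_phi \<delta> F \<sigma>' Mm = Some (pmf_of_set {A1, B1, Dol1})"
  by auto

lemma is_path_p1: "is_path (D_phi \<delta> F) (p1 u)"
proof (induction u rule: rev_induct)
  case Nil then show ?case by (simp add: p1_def is_path_def)
next
  case (snoc x xs)
  have "is_path (D_phi \<delta> F) (path_ext (p1 xs) Mm (letter_state x))"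
    apply (rule is_path_ext[OF snoc])
     apply (rule phi_AB) using letter_state_cases apply (simp add: last_p1)
    using letter_state_cases[of x] by auto
  then show ?case by (simp add: p1_snoc)
qed

lemma is_path_s1wd: "is_path (D_phi \<delta> F) (s1_word_dollar u)"
  unfolding s1wd_eq
  apply (rule is_path_ext[OF is_path_p1])
   apply (rule phi_AB) using letter_state_cases apply (simp add: last_p1)
  by auto

context
  fixes \<delta> :: "'q \<Rightarrow> letter \<Rightarrow> 'q pmf" and F :: "'q set" and \<alpha> :: "('q dstate, act) path \<Rightarrow> act pmf"
  assumes strat: "is_strategy (D_phi \<delta> F) \<alpha>"
begin

lemma alpha_Mm:
  assumes "is_path (D_phi \<delta> F) \<rho>" "path_last \<rho> \<noteq> Dol1"
  shows "\<alpha> \<rho> = return_pmf Mm"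
proof -
  have "set_pmf (\<alpha> \<rho>) \<subseteq> {m. D_phi \<delta> F (path_last \<rho>) m \<noteq> None}"
    using strat assms(1) unfolding is_strategy_def by blast
  also have "\<dots> \<subseteq> {Mm}" using assms(2) by (cases "path_last \<rho>") (auto split: if_splits)
  finally show ?thesis by (simp add: set_pmf_subset_singleton)
qed

lemma tau_Mm:
  assumes "is_path (D_phi \<delta> F) \<rho>" "path_last \<rho> \<noteq> Dol1"
  shows "strat_tau (D_phi \<delta> F) \<alpha> \<rho> = map_pmf (path_ext \<rho> Mm) (the (D_phi \<delta> F (path_last \<rho>) Mm))"
  by (simp add: strat_tau_def alpha_Mm[OF assms] bind_return_pmf)

lemma alpha_Dol:
  assumes "is_path (D_phi \<delta> F) \<rho>" "path_last \<rho> = Dol1"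
  shows "set_pmf (\<alpha> \<rho>) \<subseteq> {Mx, My}"
proof -
  have "set_pmf (\<alpha> \<rho>) \<subseteq> {m. D_phi \<delta> F (path_last \<rho>) m \<noteq> None}"
    using strat assms(1) unfolding is_strategy_def by blast
  also have "\<dots> \<subseteq> {Mx, My}" using assms(2) by (auto split: if_splits)
  finally show ?thesis .
qed

end



lemma nn_int_fin: "(\<integral>\<^sup>+x. f x \<partial>measure_pmf M) = (\<Sum>x\<in>UNIV. ennreal (pmf M x) * f (x::'q::finite))"
  by (simp add: nn_integral_measure_pmf nn_integral_count_space_finite)

lemma sum_return: "(\<Sum>x\<in>UNIV. ennreal (pmf (return_pmf q) x) * f (x::'q::finite)) = f q"
proof -
  have "(\<Sum>x\<in>UNIV. ennreal (pmf (return_pmf q) x) * f x) = (\<Sum>x\<in>UNIV. if x = q then f x else 0)"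
    by (rule sum.cong) (auto simp: pmf_return)
  then show ?thesis by simp
qed

lemma summ_enn[simp]: "(g::_ \<Rightarrow> ennreal) summable_on A"
  by (rule nonneg_summable_on_complete) simp

lemma infsum_cmult_ennreal: "infsum (\<lambda>x. (c::ennreal) * f x) A = c * infsum f A"
  by (simp add: nonneg_infsum_complete SUP_mult_left_ennreal sum_distrib_left)

lemma infsum_sum_ennreal:
  fixes g :: "'a \<Rightarrow> 'b \<Rightarrow> ennreal"
  assumes "finite S"
  shows "(\<Sum>\<^sub>\<infinity>w. \<Sum>x\<in>S. g x w) = (\<Sum>x\<in>S. \<Sum>\<^sub>\<infinity>w. g x w)"
  using assms
proof (induction S rule: finite_induct)
  case empty then show ?case by simp
next
  case (insert a S)
  then show ?case by (subst sum.insert, simp_all, subst infsum_add, simp_all)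
qed

lemma UNIV_letter: "(UNIV :: letter set) = {La, Lb}"
  using letter.exhaust by auto

lemma lists_split: "(UNIV :: letter list set) = insert [] (range (Cons La) \<union> range (Cons Lb))"
proof -
  { fix w :: "letter list" have "w \<in> insert [] (range (Cons La) \<union> range (Cons Lb))"
      proof (cases w)
      case (Cons a l) then show ?thesis by (cases a) auto
    qed simp }
  then show ?thesis by auto
qed

definition Vt :: "('q \<Rightarrow> letter \<Rightarrow> 'q pmf) \<Rightarrow> (letter list \<Rightarrow> 'q \<Rightarrow> ennreal) \<Rightarrow> letter list \<Rightarrow> 'q \<Rightarrow> letter list \<Rightarrow> ennreal" where
  "Vt \<delta> c u q w = ennreal (1 / 3 ^ (length w + 1)) *
      (\<Sum>q'\<in>UNIV. ennreal (pmf (delta_word \<delta> q w) q') * c (u @ w) q')"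

definition V :: "('q \<Rightarrow> letter \<Rightarrow> 'q pmf) \<Rightarrow> (letter list \<Rightarrow> 'q \<Rightarrow> ennreal) \<Rightarrow> letter list \<Rightarrow> 'q \<Rightarrow> ennreal" where
  "V \<delta> c u q = (\<Sum>\<^sub>\<infinity>w. Vt \<delta> c u q w)"

lemma coef_Suc: "ennreal (1 / 3 ^ (Suc n + 1)) = ennreal (1/3) * ennreal (1 / 3 ^ (n + 1))"
  by (simp add: ennreal_mult[symmetric])

lemma coef_Cons: "ennreal (1 / 3 ^ (length (\<sigma> # w) + 1)) = ennreal (1/3) * ennreal (1 / 3 ^ (length w + 1))"
  using coef_Suc by simp

lemma aux: "(a::ennreal) * (\<Sum>q'\<in>S. (\<Sum>x\<in>T. p x * r x q') * cc q') = (\<Sum>x\<in>T. p x * (a * (\<Sum>q'\<in>S. r x q' * cc q')))"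
proof -
  have "(a::ennreal) * (\<Sum>q'\<in>S. (\<Sum>x\<in>T. p x * r x q') * cc q') = (\<Sum>q'\<in>S. \<Sum>x\<in>T. p x * (a * (r x q' * cc q')))"
    by (simp add: sum_distrib_left sum_distrib_right mult_ac)
  also have "\<dots> = (\<Sum>x\<in>T. \<Sum>q'\<in>S. p x * (a * (r x q' * cc q')))" by (rule sum.swap)
  finally show ?thesis by (simp add: sum_distrib_left)
qed

lemma Vt_Nil: "Vt \<delta> c u q [] = ennreal (1/3) * c u (q::'q::finite)"
  unfolding Vt_def by (simp only: delta_word.simps sum_return) simp

lemma Vt_Cons: "Vt \<delta> c u (q::'q::finite) (\<sigma> # w) =
   ennreal (1/3) * (\<Sum>x\<in>UNIV. ennreal (pmf (\<delta> q \<sigma>) x) * Vt \<delta> c (u @ [\<sigma>]) x w)"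
proof -
  have "(\<Sum>q'\<in>UNIV. ennreal (pmf (delta_word \<delta> q (\<sigma> # w)) q') * c (u @ \<sigma> # w) q')
     = (\<Sum>q'\<in>UNIV. (\<Sum>x\<in>UNIV. ennreal (pmf (\<delta> q \<sigma>) x) * ennreal (pmf (delta_word \<delta> x w) q')) * c (u @ \<sigma> # w) q')"
    by (simp add: ennreal_pmf_bind nn_int_fin)
  then have "ennreal (1 / 3 ^ (length w + 1)) * (\<Sum>q'\<in>UNIV. ennreal (pmf (delta_word \<delta> q (\<sigma> # w)) q') * c (u @ \<sigma> # w) q')
     = (\<Sum>x\<in>UNIV. ennreal (pmf (\<delta> q \<sigma>) x) * Vt \<delta> c (u @ [\<sigma>]) x w)"
    by (simp only: aux Vt_def append_Cons append_assoc append_Nil)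
  moreover have "Vt \<delta> c u q (\<sigma> # w) = ennreal (1/3) * (ennreal (1 / 3 ^ (length w + 1)) * (\<Sum>q'\<in>UNIV. ennreal (pmf (delta_word \<delta> q (\<sigma> # w)) q') * c (u @ \<sigma> # w) q'))"
    by (simp only: Vt_def coef_Cons mult.assoc)
  ultimately show ?thesis by simp
qed

lemma V_rec: "V \<delta> c u (q::'q::finite) = ennreal (1/3) * c u q
   + ennreal (1/3) * (\<Sum>x\<in>UNIV. ennreal (pmf (\<delta> q La) x) * V \<delta> c (u @ [La]) x)
   + ennreal (1/3) * (\<Sum>x\<in>UNIV. ennreal (pmf (\<delta> q Lb) x) * V \<delta> c (u @ [Lb]) x)"
proof -
  have cons: "infsum (Vt \<delta> c u q) (range (Cons \<sigma>)) =
      ennreal (1/3) * (\<Sum>x\<in>UNIV. ennreal (pmf (\<delta> q \<sigma>) x) * V \<delta> c (u @ [\<sigma>]) x)" for \<sigma>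
  proof -
    have "infsum (Vt \<delta> c u q) (range (Cons \<sigma>)) = (\<Sum>\<^sub>\<infinity>w. Vt \<delta> c u q (\<sigma> # w))"
      by (subst infsum_reindex) (auto simp: o_def)
    also have "\<dots> = ennreal (1/3) * (\<Sum>\<^sub>\<infinity>w. (\<Sum>x\<in>UNIV. ennreal (pmf (\<delta> q \<sigma>) x) * Vt \<delta> c (u @ [\<sigma>]) x w))"
      by (simp add: Vt_Cons infsum_cmult_ennreal)
    also have "\<dots> = ennreal (1/3) * (\<Sum>x\<in>UNIV. ennreal (pmf (\<delta> q \<sigma>) x) * V \<delta> c (u @ [\<sigma>]) x)"
      by (simp add: infsum_sum_ennreal infsum_cmult_ennreal V_def)
    finally show ?thesis .
  qed
  have d: "range (Cons La) \<inter> range (Cons Lb) = ({} :: letter list set)" by auto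
  have "V \<delta> c u q = infsum (Vt \<delta> c u q) (insert [] (range (Cons La) \<union> range (Cons Lb)))"
    by (simp add: V_def lists_split[symmetric])
  also have "\<dots> = Vt \<delta> c u q [] + (infsum (Vt \<delta> c u q) (range (Cons La)) + infsum (Vt \<delta> c u q) (range (Cons Lb)))"
    by (subst infsum_insert) (auto simp: infsum_Un_disjoint[OF _ _ d])
  finally show ?thesis by (simp add: cons Vt_Nil add.assoc)
qed




lemma sum_pmf_enn: "(\<Sum>x\<in>UNIV. ennreal (pmf M (x::'q::finite))) = 1"
proof -
  have "(\<Sum>x\<in>UNIV. ennreal (pmf M (x::'q::finite)) * 1) = (\<integral>\<^sup>+x. 1 \<partial>measure_pmf M)"
    by (rule nn_int_fin[symmetric])
  then show ?thesis by simp
qed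

lemma fin_words_le1:
  "finite (Fs :: letter list set) \<Longrightarrow> (\<forall>w\<in>Fs. length w \<le> n) \<Longrightarrow> (\<Sum>w\<in>Fs. (1::real) / 3 ^ (length w + 1)) \<le> 1"
proof (induction n arbitrary: Fs)
  case 0
  then have "Fs = {} \<or> Fs = {[]}" by auto
  then show ?case by auto
next
  case (Suc n)
  define f where "f = (\<lambda>w::letter list. (1::real) / 3 ^ (length w + 1))"
  define G where "G \<sigma> = {w. \<sigma> # w \<in> Fs}" for \<sigma>
  have finG: "finite (G \<sigma>)" for \<sigma>
    unfolding G_def using finite_vimageI[OF Suc.prems(1), of "Cons \<sigma>"] by (simp add: vimage_def inj_def)
  have lenG: "\<forall>w\<in>G \<sigma>. length w \<le> n" for \<sigma> using Suc.prems(2) by (auto simp: G_def)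
  have sG: "(\<Sum>w\<in>Cons \<sigma> ` G \<sigma>. f w) \<le> 1/3" for \<sigma> :: letter
  proof -
    have "(\<Sum>w\<in>Cons \<sigma> ` G \<sigma>. f w) = (\<Sum>w\<in>G \<sigma>. f (\<sigma> # w))"
      by (subst sum.reindex) (auto simp: inj_on_def)
    also have "\<dots> = 1/3 * (\<Sum>w\<in>G \<sigma>. f w)"
      by (simp add: f_def sum_distrib_left)
    also have "\<dots> \<le> 1/3" using Suc.IH[OF finG lenG] by (simp add: f_def)
    finally show ?thesis .
  qed
  have sub: "Fs \<subseteq> insert [] (Cons La ` G La \<union> Cons Lb ` G Lb)"
  proof
    fix w assume "w \<in> Fs"
    then show "w \<in> insert [] (Cons La ` G La \<union> Cons Lb ` G Lb)"
    proof (cases w)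
      case (Cons a l) then show ?thesis using \<open>w \<in> Fs\<close> by (cases a) (auto simp: G_def)
    qed simp
  qed
  have fin2: "finite (insert [] (Cons La ` G La \<union> Cons Lb ` G Lb))" using finG by auto
  have "(\<Sum>w\<in>Fs. f w) \<le> (\<Sum>w\<in>insert [] (Cons La ` G La \<union> Cons Lb ` G Lb). f w)"
    by (rule sum_mono2[OF fin2 sub]) (simp add: f_def)
  also have "\<dots> \<le> f [] + ((\<Sum>w\<in>Cons La ` G La. f w) + (\<Sum>w\<in>Cons Lb ` G Lb. f w))"
  proof -
    have "(\<Sum>w\<in>insert [] (Cons La ` G La \<union> Cons Lb ` G Lb). f w) = f [] + (\<Sum>w\<in>(Cons La ` G La \<union> Cons Lb ` G Lb). f w)"
      using finG by (subst sum.insert) auto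
    also have "\<dots> = f [] + ((\<Sum>w\<in>Cons La ` G La. f w) + (\<Sum>w\<in>Cons Lb ` G Lb. f w))"
      using finG by (subst sum.union_disjoint) auto
    finally show ?thesis by simp
  qed
  also have "\<dots> \<le> 1" using sG[of La] sG[of Lb] by (simp add: f_def)
  finally show ?case by (simp add: f_def)
qed

lemma words_infsum_le1: "(\<Sum>\<^sub>\<infinity>w::letter list. ennreal (1 / 3 ^ (length w + 1))) \<le> 1"
proof (rule infsum_le_finite_sums)
  fix Fs :: "letter list set" assume fin: "finite Fs"
  have "\<forall>w\<in>Fs. length w \<le> Max (length ` Fs)" using fin by auto
  from fin_words_le1[OF fin this]
  have "(\<Sum>w\<in>Fs. (1::real) / 3 ^ (length w + 1)) \<le> 1" .
  moreover have "(\<Sum>w\<in>Fs. ennreal (1 / 3 ^ (length w + 1))) = ennreal (\<Sum>w\<in>Fs. (1::real) / 3 ^ (length w + 1))"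
    by (rule sum_ennreal) simp
  ultimately show "(\<Sum>w\<in>Fs. ennreal (1 / 3 ^ (length w + 1))) \<le> 1"
    by (metis ennreal_1 ennreal_leI)
qed simp

lemma Vt_le:
  assumes "\<And>v q. c v q \<le> 1"
  shows "Vt \<delta> c u (q::'q::finite) w \<le> ennreal (1 / 3 ^ (length w + 1))"
proof -
  have "(\<Sum>q'\<in>UNIV. ennreal (pmf (delta_word \<delta> q w) q') * c (u @ w) q') \<le> (\<Sum>q'\<in>UNIV. ennreal (pmf (delta_word \<delta> q w) q') * 1)"
    by (intro sum_mono mult_left_mono assms) auto
  also have "\<dots> = 1" using sum_pmf_enn by simp
  finally show ?thesis unfolding Vt_def by (metis mult.right_neutral mult_left_mono zero_le)
qed

lemma V_le1:
  assumes "\<And>v q. c v q \<le> 1"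
  shows "V \<delta> c u (q::'q::finite) \<le> 1"
proof -
  have "V \<delta> c u q \<le> (\<Sum>\<^sub>\<infinity>w::letter list. ennreal (1 / 3 ^ (length w + 1)))"
    unfolding V_def
    apply (rule infsum_mono) apply simp apply simp
    apply (rule Vt_le) using assms by blast
  also have "\<dots> \<le> 1" by (rule words_infsum_le1)
  finally show ?thesis .
qed




lemma third: "(a::ennreal) / 3 = ennreal (1/3) * a"
proof -
  have "ennreal (1/3) = 1 / 3" by (simp add: divide_ennreal[symmetric])
  moreover have "(1 / 3) * a = a * 1 / 3" by (metis ennreal_times_divide mult.commute)
  ultimately show ?thesis by simp
qed

definition symdist :: "('q \<Rightarrow> letter \<Rightarrow> 'q pmf) \<Rightarrow> 'q set \<Rightarrow> 'q \<Rightarrow> 'q dstate pmf" where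
  "symdist \<delta> F q = bind_pmf (pmf_of_set {Some La, Some Lb, None})
        (\<lambda>c. case c of
               Some \<sigma>' \<Rightarrow> map_pmf (Sym \<sigma>') (\<delta> q \<sigma>')
             | None \<Rightarrow> return_pmf (if q \<in> F then DolY else DolX))"

lemma phi_Sym: "D_phi \<delta> F (Sym \<sigma> q) Mm = Some (symdist \<delta> F q)"
  by (simp add: symdist_def)

lemma set_symdist: "set_pmf (symdist \<delta> F q) =
   Sym La ` set_pmf (\<delta> q La) \<union> Sym Lb ` set_pmf (\<delta> q Lb) \<union> {if q \<in> F then DolY else DolX}"
  by (auto simp: symdist_def)

definition fmap :: "letter list \<Rightarrow> ('q dstate, act) path \<Rightarrow> ('q dstate, act) path" where
  "fmap u v = (case path_last v of Sym \<sigma>' _ \<Rightarrow> p1 (u @ [\<sigma>']) | _ \<Rightarrow> s1_word_dollar u)"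

lemma fmap_ext[simp]: "fmap u (path_ext t m (Sym \<sigma>' x)) = p1 (u @ [\<sigma>'])"
  "fmap u (path_ext t m DolX) = s1_word_dollar u" "fmap u (path_ext t m DolY) = s1_word_dollar u"
  by (auto simp: fmap_def)

lemma map_fmap:
  fixes \<delta> :: "'q \<Rightarrow> letter \<Rightarrow> 'q pmf"
  shows "map_pmf (fmap u) (map_pmf (path_ext t Mm) (symdist \<delta> F q)) = map_pmf (path_ext (p1 u) Mm) (pmf_of_set {A1, B1, Dol1})"
proof -
  define k where "k c = (case c of Some \<sigma> \<Rightarrow> letter_state \<sigma> | None \<Rightarrow> (Dol1 :: 'q dstate))" for c :: "letter option"
  have "map_pmf (fmap u) (map_pmf (path_ext t Mm) (symdist \<delta> F q))
      = bind_pmf (pmf_of_set {Some La, Some Lb, None}) (\<lambda>c. return_pmf (path_ext (p1 u) Mm (k c)))"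
    unfolding symdist_def map_pmf_comp map_bind_pmf
    by (intro bind_pmf_cong refl) (auto simp: k_def p1_snoc s1wd_eq map_pmf_comp split: option.splits)
  also have "\<dots> = map_pmf (path_ext (p1 u) Mm) (map_pmf k (pmf_of_set {Some La, Some Lb, None}))"
    by (simp add: map_pmf_def bind_assoc_pmf bind_return_pmf map_pmf_comp)
  also have "map_pmf k (pmf_of_set {Some La, Some Lb, None}) = pmf_of_set {A1, B1, Dol1}"
    by (subst map_pmf_of_set_inj) (auto simp: inj_on_def k_def letter_state_def)
  finally show ?thesis .
qed

lemma int_symdist:
  "(\<integral>\<^sup>+v. g v \<partial>measure_pmf (map_pmf (path_ext t Mm) (symdist \<delta> F (q::'q::finite))))
   = ennreal (1/3) * g (path_ext t Mm (if q \<in> F then DolY else DolX))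
   + ennreal (1/3) * (\<Sum>x\<in>UNIV. ennreal (pmf (\<delta> q La) x) * g (path_ext t Mm (Sym La x)))
   + ennreal (1/3) * (\<Sum>x\<in>UNIV. ennreal (pmf (\<delta> q Lb) x) * g (path_ext t Mm (Sym Lb x)))"
  by (simp add: symdist_def nn_integral_pmf_of_set nn_int_fin third distrib_left add_ac)




lemma Delta_le1: "(\<And>p. e p \<le> 1) \<Longrightarrow> bisim_Delta \<tau> lbl e p \<le> 1"
proof -
  assume e: "\<And>p. e p \<le> 1"
  obtain s t where p: "p = (s,t)" by fastforce
  have "(INF \<omega>\<in>couplings (\<tau> s) (\<tau> t). \<integral>\<^sup>+ uv. e uv \<partial>measure_pmf \<omega>) \<le> \<integral>\<^sup>+ uv. e uv \<partial>measure_pmf (pair_pmf (\<tau> s) (\<tau> t))"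
    by (rule INF_lower) (rule pair_coupling)
  also have "\<dots> \<le> \<integral>\<^sup>+ uv. 1 \<partial>measure_pmf (pair_pmf (\<tau> s) (\<tau> t))"
    by (rule nn_integral_mono) (rule e)
  also have "\<dots> = 1" by simp
  finally show ?thesis unfolding bisim_Delta_def p by auto
qed

lemma INF_coupling_le_ret:
  "(INF \<omega>\<in>couplings \<mu> (return_pmf v0). \<integral>\<^sup>+ uv. e uv \<partial>measure_pmf \<omega>) \<le> (\<integral>\<^sup>+ u. e (u, v0) \<partial>measure_pmf \<mu>)"
proof -
  have "map_pmf (\<lambda>u. (u, v0)) \<mu> \<in> couplings \<mu> (return_pmf v0)"
    by (simp add: couplings_def pmf.map_comp o_def)
  then have "(INF \<omega>\<in>couplings \<mu> (return_pmf v0). \<integral>\<^sup>+ uv. e uv \<partial>measure_pmf \<omega>) \<le> \<integral>\<^sup>+ uv. e uv \<partial>measure_pmf (map_pmf (\<lambda>u. (u, v0)) \<mu>)"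
    by (rule INF_lower)
  then show ?thesis by simp
qed

lemma INF_coupling_ge_fst:
  assumes "\<And>u v. u \<in> set_pmf \<mu> \<Longrightarrow> v \<in> set_pmf \<nu> \<Longrightarrow> e (u, v) \<ge> K u"
  shows "(INF \<omega>\<in>couplings \<mu> \<nu>. \<integral>\<^sup>+ uv. e uv \<partial>measure_pmf \<omega>) \<ge> (\<integral>\<^sup>+ u. K u \<partial>measure_pmf \<mu>)"
proof (rule INF_greatest)
  fix \<omega> assume w: "\<omega> \<in> couplings \<mu> \<nu>"
  then have m1: "map_pmf fst \<omega> = \<mu>" and m2: "map_pmf snd \<omega> = \<nu>" by (auto simp: couplings_def)
  have "(\<integral>\<^sup>+ u. K u \<partial>measure_pmf \<mu>) = (\<integral>\<^sup>+ uv. K (fst uv) \<partial>measure_pmf \<omega>)"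
    by (simp flip: m1)
  also have "\<dots> \<le> (\<integral>\<^sup>+ uv. e uv \<partial>measure_pmf \<omega>)"
  proof (rule nn_integral_mono_AE, rule AE_pmfI)
    fix uv assume "uv \<in> set_pmf \<omega>"
    then have "fst uv \<in> set_pmf \<mu>" "snd uv \<in> set_pmf \<nu>"
      using m1 m2 by force+
    then show "K (fst uv) \<le> e uv" using assms[of "fst uv" "snd uv"] by simp
  qed
  finally show "(\<integral>\<^sup>+ u. K u \<partial>measure_pmf \<mu>) \<le> (\<integral>\<^sup>+ uv. e uv \<partial>measure_pmf \<omega>)" .
qed

lemma lbl_eq: "strat_label D_label \<rho> = D_label (path_last \<rho>)"
  by (simp add: strat_label_def)

lemma last_s1wd[simp]: "path_last (s1_word_dollar u) = Dol1"
  by (simp add: s1wd_eq)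

lemma lbl_p1: "D_label (path_last (p1 u)) = letter_lab (last (La # u))"
  by (simp add: last_p1)

lemma is_path_Nil: "is_path \<phi> (s, [])"
  by (simp add: is_path_def)

locale mdp =
  fixes \<delta> :: "'q::finite \<Rightarrow> letter \<Rightarrow> 'q pmf" and F :: "'q set" and \<alpha> :: "('q dstate, act) path \<Rightarrow> act pmf"
  assumes strat: "is_strategy (D_phi \<delta> F) \<alpha>"
begin

abbreviation "tau \<equiv> strat_tau (D_phi \<delta> F) \<alpha>"
abbreviation "lbl \<equiv> strat_label (D_label :: 'q dstate \<Rightarrow> lab)"
abbreviation "dd \<equiv> lfp (bisim_Delta tau lbl)"

definition cvr :: "letter list \<Rightarrow> 'q \<Rightarrow> real" where
  "cvr u q = (if q \<in> F then pmf (\<alpha> (s1_word_dollar u)) Mx else pmf (\<alpha> (s1_word_dollar u)) My)"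

abbreviation "VV \<equiv> V \<delta> (\<lambda>u q. ennreal (cvr u q))"

lemma VV_le1: "VV u q \<le> 1"
  by (rule V_le1) (simp add: cvr_def pmf_le_1)

definition EE :: "('q dstate, act) path \<times> ('q dstate, act) path \<Rightarrow> ennreal" where
  "EE = (\<lambda>(s,t). if is_path (D_phi \<delta> F) t then
     (case path_last t of
       Sym \<sigma> q \<Rightarrow> if s \<in> range p1 \<and> last (La # inv p1 s) = \<sigma> then VV (inv p1 s) q else 1
     | DolX \<Rightarrow> if s \<in> range s1_word_dollar then ennreal (pmf (\<alpha> s) My) else 1
     | DolY \<Rightarrow> if s \<in> range s1_word_dollar then ennreal (pmf (\<alpha> s) Mx) else 1
     | X2 \<Rightarrow> if is_path (D_phi \<delta> F) s \<and> path_last s = X1 then 0 else 1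
     | Y2 \<Rightarrow> if is_path (D_phi \<delta> F) s \<and> path_last s = Y1 then 0 else 1
     | _ \<Rightarrow> 1) else 1)"

lemma inv_p1[simp]: "inv p1 (p1 u) = u"
  by (rule inv_f_f) (auto intro: injI p1_inj)

lemma EE_le1: "EE p \<le> 1"
  by (auto simp: EE_def VV_le1 pmf_le_1 split: dstate.splits prod.splits)

lemma EE_mismatch: "lbl s \<noteq> lbl t \<Longrightarrow> EE (s, t) = 1"
  by (auto simp: EE_def lbl_eq last_p1 letter_state_def letter_lab_def split: dstate.splits letter.splits)

lemma EE_p1: "is_path (D_phi \<delta> F) t \<Longrightarrow> path_last t = Sym \<sigma> q \<Longrightarrow> \<sigma> = last (La # u) \<Longrightarrow> EE (p1 u, t) = VV u q"
  by (simp add: EE_def)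

lemma EE_dolX: "is_path (D_phi \<delta> F) t \<Longrightarrow> path_last t = DolX \<Longrightarrow> EE (s1_word_dollar u, t) = ennreal (pmf (\<alpha> (s1_word_dollar u)) My)"
  by (simp add: EE_def)

lemma EE_dolY: "is_path (D_phi \<delta> F) t \<Longrightarrow> path_last t = DolY \<Longrightarrow> EE (s1_word_dollar u, t) = ennreal (pmf (\<alpha> (s1_word_dollar u)) Mx)"
  by (simp add: EE_def)

lemma EE_X: "is_path (D_phi \<delta> F) s \<Longrightarrow> is_path (D_phi \<delta> F) t \<Longrightarrow> path_last s = X1 \<Longrightarrow> path_last t = X2 \<Longrightarrow> EE (s, t) = 0"
  by (simp add: EE_def)

lemma EE_Y: "is_path (D_phi \<delta> F) s \<Longrightarrow> is_path (D_phi \<delta> F) t \<Longrightarrow> path_last s = Y1 \<Longrightarrow> path_last t = Y2 \<Longrightarrow> EE (s, t) = 0"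
  by (simp add: EE_def)

lemma tau_Sym:
  assumes "is_path (D_phi \<delta> F) t" "path_last t = Sym \<sigma> q"
  shows "tau t = map_pmf (path_ext t Mm) (symdist \<delta> F q)"
proof -
  have "tau t = map_pmf (path_ext t Mm) (the (D_phi \<delta> F (path_last t) Mm))"
    by (rule tau_Mm[OF strat]) (simp_all add: assms)
  also have "the (D_phi \<delta> F (path_last t) Mm) = symdist \<delta> F q" by (simp only: assms(2) phi_Sym option.sel)
  finally show ?thesis .
qed

lemma tau_p1: "tau (p1 u) = map_pmf (path_ext (p1 u) Mm) (pmf_of_set {A1, B1, Dol1})"
proof -
  have "path_last (p1 u) = A1 \<or> path_last (p1 u) = B1" by (simp add: last_p1 letter_state_cases)
  moreover have "tau (p1 u) = map_pmf (path_ext (p1 u) Mm) (the (D_phi \<delta> F (path_last (p1 u)) Mm))"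
    by (rule tau_Mm[OF strat is_path_p1]) (simp add: last_p1 letter_state_def split: letter.splits)
  moreover have "the (D_phi \<delta> F (path_last (p1 u)) Mm) = pmf_of_set {A1, B1, Dol1}"
    by (cases "last (La # u)") (simp_all add: last_p1 letter_state_def)
  ultimately show ?thesis by simp
qed

lemma tau_ret: "is_path (D_phi \<delta> F) t \<Longrightarrow> path_last t \<noteq> Dol1 \<Longrightarrow>
   D_phi \<delta> F (path_last t) Mm = Some (return_pmf z) \<Longrightarrow> tau t = return_pmf (path_ext t Mm z)"
  by (simp add: tau_Mm[OF strat])

lemma ext_sym_valid: "is_path (D_phi \<delta> F) t \<Longrightarrow> path_last t = Sym \<sigma> q \<Longrightarrow> b \<in> set_pmf (symdist \<delta> F q) \<Longrightarrow>
   is_path (D_phi \<delta> F) (path_ext t Mm b)"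
  by (rule is_path_ext[where \<mu>="symdist \<delta> F q"]) (simp_all only: phi_Sym)

end



lemma fmap_if: "fmap u (path_ext t m (if b then DolY else DolX)) = s1_word_dollar u"
  by (simp add: fmap_def)

context mdp begin

lemma upper_Sym:
  assumes t: "is_path (D_phi \<delta> F) t" "path_last t = Sym \<sigma> q" "\<sigma> = last (La # u)"
  shows "bisim_Delta tau lbl EE (p1 u, t) \<le> VV u q"
proof -
  have lab: "lbl (p1 u) = lbl t" using t by (simp add: lbl_eq lbl_p1)
  have dol: "EE (s1_word_dollar u, path_ext t Mm (if q \<in> F then DolY else DolX)) = ennreal (cvr u q)"
  proof -
    have v: "is_path (D_phi \<delta> F) (path_ext t Mm (if q \<in> F then DolY else DolX))"
      by (rule ext_sym_valid[OF t(1,2)]) (simp add: set_symdist)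
    show ?thesis
    proof (cases "q \<in> F")
      case True then show ?thesis using EE_dolY[OF v] by (simp add: cvr_def)
    next
      case False then show ?thesis using EE_dolX[OF v] by (simp add: cvr_def)
    qed
  qed
  have sym: "ennreal (pmf (\<delta> q \<sigma>') x) * EE (p1 (u @ [\<sigma>']), path_ext t Mm (Sym \<sigma>' x))
        = ennreal (pmf (\<delta> q \<sigma>') x) * VV (u @ [\<sigma>']) x" for \<sigma>' x
  proof (cases "pmf (\<delta> q \<sigma>') x = 0")
    case False
    then have "x \<in> set_pmf (\<delta> q \<sigma>')" by (simp add: set_pmf_iff)
    then have "Sym \<sigma>' x \<in> set_pmf (symdist \<delta> F q)"
      by (cases \<sigma>') (auto simp: set_symdist)
    from ext_sym_valid[OF t(1,2) this]
    have "EE (p1 (u @ [\<sigma>']), path_ext t Mm (Sym \<sigma>' x)) = VV (u @ [\<sigma>']) x"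
      by (rule EE_p1) simp_all
    then show ?thesis by simp
  qed simp
  have "bisim_Delta tau lbl EE (p1 u, t) = (INF \<omega>\<in>couplings (tau (p1 u)) (tau t). \<integral>\<^sup>+uv. EE uv \<partial>measure_pmf \<omega>)"
    by (rule Delta_eq_INF[where lbl=lbl and s="p1 u" and t=t, OF lab])
  also have "\<dots> \<le> \<integral>\<^sup>+v. EE (fmap u v, v) \<partial>measure_pmf (tau t)"
    by (rule INF_coupling_le) (simp add: tau_Sym[OF t(1,2)] tau_p1 map_fmap)
  also have "\<dots> = ennreal (1/3) * ennreal (cvr u q)
   + ennreal (1/3) * (\<Sum>x\<in>UNIV. ennreal (pmf (\<delta> q La) x) * VV (u @ [La]) x)
   + ennreal (1/3) * (\<Sum>x\<in>UNIV. ennreal (pmf (\<delta> q Lb) x) * VV (u @ [Lb]) x)"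
    unfolding tau_Sym[OF t(1,2)] int_symdist fmap_ext fmap_if dol sym ..
  also have "\<dots> = VV u q" by (rule V_rec[symmetric])
  finally show ?thesis .
qed

lemma int_dol:
  assumes s: "s = s1_word_dollar u"
  shows "(\<integral>\<^sup>+x. g x \<partial>measure_pmf (tau s)) =
     (\<integral>\<^sup>+m. (if m = Mx then g (path_ext s Mx X1) else g (path_ext s My Y1)) \<partial>measure_pmf (\<alpha> s))"
proof -
  have A: "set_pmf (\<alpha> s) \<subseteq> {Mx, My}" by (rule alpha_Dol[OF strat]) (simp_all add: s is_path_s1wd)
  have "(\<integral>\<^sup>+x. g x \<partial>measure_pmf (tau s)) = (\<integral>\<^sup>+m. \<integral>\<^sup>+t'. g (path_ext s m t') \<partial>measure_pmf (the (D_phi \<delta> F (path_last s) m)) \<partial>measure_pmf (\<alpha> s))"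
    by (simp add: strat_tau_def)
  also have "\<dots> = (\<integral>\<^sup>+m. (if m = Mx then g (path_ext s Mx X1) else g (path_ext s My Y1)) \<partial>measure_pmf (\<alpha> s))"
    by (rule nn_integral_cong_AE, rule AE_pmfI) (use A in \<open>auto simp: s\<close>)
  finally show ?thesis .
qed

lemma ext_dol_valid: "s = s1_word_dollar u \<Longrightarrow> is_path (D_phi \<delta> F) (path_ext s Mx X1)"
   "s = s1_word_dollar u \<Longrightarrow> is_path (D_phi \<delta> F) (path_ext s My Y1)"
  using is_path_ext[OF is_path_s1wd[of \<delta> F u], of Mx "return_pmf X1" X1]
    is_path_ext[OF is_path_s1wd[of \<delta> F u], of My "return_pmf Y1" Y1] by simp_all

lemma int_ind:
  assumes A: "set_pmf (\<alpha> s) \<subseteq> {Mx, My}"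
  shows "(\<integral>\<^sup>+m. (if m = Mx then 0 else 1) \<partial>measure_pmf (\<alpha> s)) = ennreal (pmf (\<alpha> s) My)"
    "(\<integral>\<^sup>+m. (if m = Mx then 1 else 0) \<partial>measure_pmf (\<alpha> s)) = ennreal (pmf (\<alpha> s) Mx)"
proof -
  have "(\<integral>\<^sup>+m. (if m = Mx then 0 else 1) \<partial>measure_pmf (\<alpha> s)) = (\<integral>\<^sup>+m. indicator {My} m \<partial>measure_pmf (\<alpha> s))"
    by (rule nn_integral_cong_AE, rule AE_pmfI) (use A in auto)
  also have "\<dots> = emeasure (measure_pmf (\<alpha> s)) {My}" by simp
  finally show "(\<integral>\<^sup>+m. (if m = Mx then 0 else 1) \<partial>measure_pmf (\<alpha> s)) = ennreal (pmf (\<alpha> s) My)"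
    by (simp add: emeasure_pmf_single)
  have "(\<integral>\<^sup>+m. (if m = Mx then 1 else 0) \<partial>measure_pmf (\<alpha> s)) = (\<integral>\<^sup>+m. indicator {Mx} m \<partial>measure_pmf (\<alpha> s))"
    by (rule nn_integral_cong_AE, rule AE_pmfI) (use A in auto)
  also have "\<dots> = emeasure (measure_pmf (\<alpha> s)) {Mx}" by simp
  finally show "(\<integral>\<^sup>+m. (if m = Mx then 1 else 0) \<partial>measure_pmf (\<alpha> s)) = ennreal (pmf (\<alpha> s) Mx)"
    by (simp add: emeasure_pmf_single)
qed

end



context mdp begin

lemma valid_ret:
  assumes "is_path (D_phi \<delta> F) t" "D_phi \<delta> F (path_last t) Mm = Some (return_pmf z)"
  shows "is_path (D_phi \<delta> F) (path_ext t Mm z)"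
  by (rule is_path_ext[OF assms]) simp

lemma upper_dolX:
  assumes t: "is_path (D_phi \<delta> F) t" "path_last t = DolX" and s: "s = s1_word_dollar u"
  shows "bisim_Delta tau lbl EE (s, t) \<le> ennreal (pmf (\<alpha> s) My)"
proof -
  have lab: "lbl s = lbl t" using t s by (simp add: lbl_eq)
  have phit: "D_phi \<delta> F (path_last t) Mm = Some (return_pmf X2)" using t by simp
  have tt: "tau t = return_pmf (path_ext t Mm X2)" by (rule tau_ret[OF t(1) _ phit]) (simp add: t)
  have v0: "is_path (D_phi \<delta> F) (path_ext t Mm X2)" by (rule valid_ret[OF t(1) phit])
  have A: "set_pmf (\<alpha> s) \<subseteq> {Mx, My}" by (rule alpha_Dol[OF strat]) (simp_all add: s is_path_s1wd)
  have "bisim_Delta tau lbl EE (s, t) = (INF \<omega>\<in>couplings (tau s) (tau t). \<integral>\<^sup>+uv. EE uv \<partial>measure_pmf \<omega>)"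
    by (rule Delta_eq_INF[where lbl=lbl and s=s and t=t, OF lab])
  also have "\<dots> \<le> (\<integral>\<^sup>+u'. EE (u', path_ext t Mm X2) \<partial>measure_pmf (tau s))"
    unfolding tt by (rule INF_coupling_le_ret)
  also have "\<dots> = (\<integral>\<^sup>+m. (if m = Mx then EE (path_ext s Mx X1, path_ext t Mm X2) else EE (path_ext s My Y1, path_ext t Mm X2)) \<partial>measure_pmf (\<alpha> s))"
    by (rule int_dol[OF s])
  also have "\<dots> \<le> (\<integral>\<^sup>+m. (if m = Mx then 0 else 1) \<partial>measure_pmf (\<alpha> s))"
    using EE_X[OF ext_dol_valid(1)[OF s] v0] EE_le1 by (intro nn_integral_mono) auto
  also have "\<dots> = ennreal (pmf (\<alpha> s) My)" by (rule int_ind(1)[OF A])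
  finally show ?thesis .
qed

lemma upper_dolY:
  assumes t: "is_path (D_phi \<delta> F) t" "path_last t = DolY" and s: "s = s1_word_dollar u"
  shows "bisim_Delta tau lbl EE (s, t) \<le> ennreal (pmf (\<alpha> s) Mx)"
proof -
  have lab: "lbl s = lbl t" using t s by (simp add: lbl_eq)
  have phit: "D_phi \<delta> F (path_last t) Mm = Some (return_pmf Y2)" using t by simp
  have tt: "tau t = return_pmf (path_ext t Mm Y2)" by (rule tau_ret[OF t(1) _ phit]) (simp add: t)
  have v0: "is_path (D_phi \<delta> F) (path_ext t Mm Y2)" by (rule valid_ret[OF t(1) phit])
  have A: "set_pmf (\<alpha> s) \<subseteq> {Mx, My}" by (rule alpha_Dol[OF strat]) (simp_all add: s is_path_s1wd)
  have "bisim_Delta tau lbl EE (s, t) = (INF \<omega>\<in>couplings (tau s) (tau t). \<integral>\<^sup>+uv. EE uv \<partial>measure_pmf \<omega>)"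
    by (rule Delta_eq_INF[where lbl=lbl and s=s and t=t, OF lab])
  also have "\<dots> \<le> (\<integral>\<^sup>+u'. EE (u', path_ext t Mm Y2) \<partial>measure_pmf (tau s))"
    unfolding tt by (rule INF_coupling_le_ret)
  also have "\<dots> = (\<integral>\<^sup>+m. (if m = Mx then EE (path_ext s Mx X1, path_ext t Mm Y2) else EE (path_ext s My Y1, path_ext t Mm Y2)) \<partial>measure_pmf (\<alpha> s))"
    by (rule int_dol[OF s])
  also have "\<dots> \<le> (\<integral>\<^sup>+m. (if m = Mx then 1 else 0) \<partial>measure_pmf (\<alpha> s))"
    using EE_Y[OF ext_dol_valid(2)[OF s] v0] EE_le1 by (intro nn_integral_mono) auto
  also have "\<dots> = ennreal (pmf (\<alpha> s) Mx)" by (rule int_ind(2)[OF A])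
  finally show ?thesis .
qed

lemma upper_sink:
  assumes s: "is_path (D_phi \<delta> F) s" and t: "is_path (D_phi \<delta> F) t"
    and st: "(path_last s = X1 \<and> path_last t = X2) \<or> (path_last s = Y1 \<and> path_last t = Y2)"
  shows "bisim_Delta tau lbl EE (s, t) \<le> 0"
proof -
  obtain zs zt where z: "D_phi \<delta> F (path_last s) Mm = Some (return_pmf zs)" "D_phi \<delta> F (path_last t) Mm = Some (return_pmf zt)"
    and zz: "(zs = X1 \<and> zt = X2) \<or> (zs = Y1 \<and> zt = Y2)" using st by auto
  have lab: "lbl s = lbl t" using st by (auto simp: lbl_eq)
  have ts: "tau s = return_pmf (path_ext s Mm zs)" by (rule tau_ret[OF s _ z(1)]) (use st in auto)
  have tt: "tau t = return_pmf (path_ext t Mm zt)" by (rule tau_ret[OF t _ z(2)]) (use st in auto)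
  have "bisim_Delta tau lbl EE (s, t) = (INF \<omega>\<in>couplings (tau s) (tau t). \<integral>\<^sup>+uv. EE uv \<partial>measure_pmf \<omega>)"
    by (rule Delta_eq_INF[where lbl=lbl and s=s and t=t, OF lab])
  also have "\<dots> \<le> (\<integral>\<^sup>+u'. EE (u', path_ext t Mm zt) \<partial>measure_pmf (tau s))"
    unfolding tt by (rule INF_coupling_le_ret)
  also have "\<dots> = EE (path_ext s Mm zs, path_ext t Mm zt)" unfolding ts by simp
  also have "\<dots> = 0"
  proof (cases "zs = X1")
    case True then show ?thesis using zz EE_X[OF valid_ret[OF s z(1)] valid_ret[OF t z(2)]] by simp
  next
    case False then show ?thesis using zz EE_Y[OF valid_ret[OF s z(1)] valid_ret[OF t z(2)]] by simp
  qed
  finally show ?thesis .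
qed

lemma EE_prefix: "bisim_Delta tau lbl EE \<le> EE"
proof (rule le_funI)
  fix p :: "('q dstate, act) path \<times> ('q dstate, act) path"
  obtain s t where p: "p = (s, t)" by (rule prod.exhaust)
  show "bisim_Delta tau lbl EE p \<le> EE p"
  proof (cases "EE (s,t) = 1")
    case True then show ?thesis using Delta_le1[OF EE_le1] p by simp
  next
    case ne: False
    then have vt: "is_path (D_phi \<delta> F) t" by (auto simp: EE_def split: if_splits)
    show ?thesis
    proof (cases "path_last t")
      case (Sym \<sigma> q)
      with ne vt obtain u where u: "s = p1 u" "last (La # u) = \<sigma>" by (auto simp: EE_def split: if_splits)
      show ?thesis using upper_Sym[OF vt Sym u(2)[symmetric]] EE_p1[OF vt Sym u(2)[symmetric]] p u by simp
    next
      case DolX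
      with ne vt obtain u where u: "s = s1_word_dollar u" by (auto simp: EE_def split: if_splits)
      show ?thesis using upper_dolX[OF vt DolX u] EE_dolX[OF vt DolX] p u by simp
    next
      case DolY
      with ne vt obtain u where u: "s = s1_word_dollar u" by (auto simp: EE_def split: if_splits)
      show ?thesis using upper_dolY[OF vt DolY u] EE_dolY[OF vt DolY] p u by simp
    next
      case X2
      with ne vt have vs: "is_path (D_phi \<delta> F) s" "path_last s = X1" by (auto simp: EE_def split: if_splits)
      show ?thesis using upper_sink[OF vs(1) vt] vs X2 p by simp
    next
      case Y2
      with ne vt have vs: "is_path (D_phi \<delta> F) s" "path_last s = Y1" by (auto simp: EE_def split: if_splits)
      show ?thesis using upper_sink[OF vs(1) vt] vs Y2 p by simp
    qed (use ne vt in \<open>auto simp: EE_def\<close>)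
  qed
qed

lemma dd_le_EE: "dd \<le> EE"
  by (rule lfp_lowerbound) (rule EE_prefix)

end



context mdp begin

lemma dd_fix: "dd p = bisim_Delta tau lbl dd p"
  using lfp_fix[of tau lbl] by (metis)

lemma lower_dol:
  assumes t: "is_path (D_phi \<delta> F) t" "path_last t = (if q \<in> F then DolY else DolX)"
  shows "ennreal (cvr u q) \<le> dd (s1_word_dollar u, t)"
proof -
  define s where "s = (s1_word_dollar u :: ('q dstate, act) path)"
  define zt where "zt = (if q \<in> F then Y2 else (X2 :: 'q dstate))"
  have lab: "lbl s = lbl t" using t by (simp add: lbl_eq s_def)
  have phit: "D_phi \<delta> F (path_last t) Mm = Some (return_pmf zt)" using t by (simp add: zt_def)
  have tt: "tau t = return_pmf (path_ext t Mm zt)" by (rule tau_ret[OF t(1) _ phit]) (simp add: t)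
  have A: "set_pmf (\<alpha> s) \<subseteq> {Mx, My}" by (rule alpha_Dol[OF strat]) (simp_all add: s_def is_path_s1wd)
  define K where "K u' = (if path_last u' = (if q \<in> F then X1 else Y1) then 1 else (0::ennreal))" for u' :: "('q dstate, act) path"
  have "(\<integral>\<^sup>+u'. K u' \<partial>measure_pmf (tau s)) \<le> (INF \<omega>\<in>couplings (tau s) (tau t). \<integral>\<^sup>+uv. dd uv \<partial>measure_pmf \<omega>)"
  proof (rule INF_coupling_ge_fst)
    fix u' v assume "u' \<in> set_pmf (tau s)" "v \<in> set_pmf (tau t)"
    then have v: "v = path_ext t Mm zt" by (simp add: tt)
    show "K u' \<le> dd (u', v)"
    proof (cases "path_last u' = (if q \<in> F then X1 else Y1)")
      case True
      then have "lbl u' \<noteq> lbl v" by (auto simp: lbl_eq v zt_def)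
      then show ?thesis by (simp add: lfp_mismatch K_def)
    qed (simp add: K_def)
  qed
  also have "\<dots> = dd (s, t)"
    by (subst dd_fix) (rule Delta_eq_INF[where lbl=lbl and s=s and t=t, OF lab, symmetric])
  finally have le: "(\<integral>\<^sup>+u'. K u' \<partial>measure_pmf (tau s)) \<le> dd (s, t)" .
  have "(\<integral>\<^sup>+u'. K u' \<partial>measure_pmf (tau s)) = (\<integral>\<^sup>+m. (if m = Mx then K (path_ext s Mx X1) else K (path_ext s My Y1)) \<partial>measure_pmf (\<alpha> s))"
    by (rule int_dol) (simp add: s_def)
  also have "\<dots> = ennreal (cvr u q)"
  proof (cases "q \<in> F")
    case True then show ?thesis using int_ind(2)[OF A] unfolding K_def by (simp add: cvr_def s_def)
  next
    case False then show ?thesis using int_ind(1)[OF A] unfolding K_def by (simp add: cvr_def s_def)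
  qed
  finally show ?thesis using le by (simp add: s_def)
qed

lemma dd_R1:
  assumes t: "is_path (D_phi \<delta> F) t" "path_last t = Sym \<sigma> q" "\<sigma> = last (La # u)"
  shows "dd (p1 u, t) = ennreal (1/3) * dd (s1_word_dollar u, path_ext t Mm (if q \<in> F then DolY else DolX))
   + ennreal (1/3) * (\<Sum>x\<in>UNIV. ennreal (pmf (\<delta> q La) x) * dd (p1 (u @ [La]), path_ext t Mm (Sym La x)))
   + ennreal (1/3) * (\<Sum>x\<in>UNIV. ennreal (pmf (\<delta> q Lb) x) * dd (p1 (u @ [Lb]), path_ext t Mm (Sym Lb x)))"
proof -
  have lab: "lbl (p1 u) = lbl t" using t by (simp add: lbl_eq lbl_p1)
  have "dd (p1 u, t) = (INF \<omega>\<in>couplings (tau (p1 u)) (tau t). \<integral>\<^sup>+uv. dd uv \<partial>measure_pmf \<omega>)"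
    by (subst dd_fix) (rule Delta_eq_INF[where lbl=lbl and s="p1 u" and t=t, OF lab])
  also have "\<dots> = \<integral>\<^sup>+v. dd (fmap u v, v) \<partial>measure_pmf (tau t)"
  proof (rule antisym)
    show "(INF \<omega>\<in>couplings (tau (p1 u)) (tau t). \<integral>\<^sup>+uv. dd uv \<partial>measure_pmf \<omega>) \<le> \<integral>\<^sup>+v. dd (fmap u v, v) \<partial>measure_pmf (tau t)"
      by (rule INF_coupling_le) (simp add: tau_Sym[OF t(1,2)] tau_p1 map_fmap)
    show "\<integral>\<^sup>+v. dd (fmap u v, v) \<partial>measure_pmf (tau t) \<le> (INF \<omega>\<in>couplings (tau (p1 u)) (tau t). \<integral>\<^sup>+uv. dd uv \<partial>measure_pmf \<omega>)"
    proof (rule INF_coupling_ge)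
      fix u' v assume u': "u' \<in> set_pmf (tau (p1 u))" and v: "v \<in> set_pmf (tau t)"
      show "dd (fmap u v, v) \<le> dd (u', v)"
      proof (cases "lbl u' = lbl v")
        case False then show ?thesis by (simp add: lfp_mismatch lfp_le1)
      next
        case True
        from u' obtain a where a: "a \<in> {A1, B1, Dol1}" "u' = path_ext (p1 u) Mm a" by (auto simp: tau_p1)
        from v obtain b where b: "b \<in> set_pmf (symdist \<delta> F q)" "v = path_ext t Mm b" by (auto simp: tau_Sym[OF t(1,2)])
        from True a b have "u' = fmap u v"
          by (auto simp: lbl_eq set_symdist p1_snoc s1wd_eq letter_state_def letter_lab_def split: if_splits)
        then show ?thesis by simp
      qed
    qed
  qed
  also have "\<dots> = ennreal (1/3) * dd (s1_word_dollar u, path_ext t Mm (if q \<in> F then DolY else DolX))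
   + ennreal (1/3) * (\<Sum>x\<in>UNIV. ennreal (pmf (\<delta> q La) x) * dd (p1 (u @ [La]), path_ext t Mm (Sym La x)))
   + ennreal (1/3) * (\<Sum>x\<in>UNIV. ennreal (pmf (\<delta> q Lb) x) * dd (p1 (u @ [Lb]), path_ext t Mm (Sym Lb x)))"
    unfolding tau_Sym[OF t(1,2)] int_symdist fmap_ext fmap_if ..
  finally show ?thesis .
qed

end



context mdp begin

definition PP :: "(letter list \<times> ('q dstate, act) path \<times> 'q) set" where
  "PP = {(u, t, q). is_path (D_phi \<delta> F) t \<and> path_last t = Sym (last (La # u)) q}"

definition kk :: ennreal where
  "kk = (SUP x\<in>PP. VV (fst x) (snd (snd x)) - dd (p1 (fst x), fst (snd x)))"

lemma VV_le_dd_kk: "(u, t, q) \<in> PP \<Longrightarrow> VV u q \<le> dd (p1 u, t) + kk"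
proof -
  assume "(u, t, q) \<in> PP"
  then have "VV u q - dd (p1 u, t) \<le> kk" unfolding kk_def by (rule SUP_upper2) simp
  then show ?thesis by (simp add: ennreal_minus_le_iff)
qed

lemma sum_bound:
  assumes t: "is_path (D_phi \<delta> F) t" "path_last t = Sym \<sigma> q"
  shows "(\<Sum>x\<in>UNIV. ennreal (pmf (\<delta> q \<sigma>') x) * VV (u @ [\<sigma>']) x)
     \<le> (\<Sum>x\<in>UNIV. ennreal (pmf (\<delta> q \<sigma>') x) * dd (p1 (u @ [\<sigma>']), path_ext t Mm (Sym \<sigma>' x))) + kk"
proof -
  have "(\<Sum>x\<in>UNIV. ennreal (pmf (\<delta> q \<sigma>') x) * VV (u @ [\<sigma>']) x)
     \<le> (\<Sum>x\<in>UNIV. ennreal (pmf (\<delta> q \<sigma>') x) * (dd (p1 (u @ [\<sigma>']), path_ext t Mm (Sym \<sigma>' x)) + kk))"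
  proof (rule sum_mono)
    fix x :: 'q
    show "ennreal (pmf (\<delta> q \<sigma>') x) * VV (u @ [\<sigma>']) x \<le> ennreal (pmf (\<delta> q \<sigma>') x) * (dd (p1 (u @ [\<sigma>']), path_ext t Mm (Sym \<sigma>' x)) + kk)"
    proof (cases "pmf (\<delta> q \<sigma>') x = 0")
      case False
      then have "x \<in> set_pmf (\<delta> q \<sigma>')" by (simp add: set_pmf_iff)
      then have "Sym \<sigma>' x \<in> set_pmf (symdist \<delta> F q)"
        by (cases \<sigma>') (auto simp: set_symdist)
      from ext_sym_valid[OF t this]
      have "(u @ [\<sigma>'], path_ext t Mm (Sym \<sigma>' x), x) \<in> PP" by (simp add: PP_def)
      from VV_le_dd_kk[OF this] show ?thesis by (rule mult_left_mono) simp
    qed simp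
  qed
  also have "\<dots> = (\<Sum>x\<in>UNIV. ennreal (pmf (\<delta> q \<sigma>') x) * dd (p1 (u @ [\<sigma>']), path_ext t Mm (Sym \<sigma>' x)))
      + (\<Sum>x\<in>UNIV. ennreal (pmf (\<delta> q \<sigma>') x)) * kk"
    by (simp only: distrib_left sum.distrib sum_distrib_right)
  also have "\<dots> = (\<Sum>x\<in>UNIV. ennreal (pmf (\<delta> q \<sigma>') x) * dd (p1 (u @ [\<sigma>']), path_ext t Mm (Sym \<sigma>' x))) + kk"
    by (simp add: sum_pmf_enn)
  finally show ?thesis .
qed

lemma contract: "(u, t, q) \<in> PP \<Longrightarrow> VV u q \<le> dd (p1 u, t) + ennreal (2/3) * kk"
proof -
  assume "(u, t, q) \<in> PP"
  then have t: "is_path (D_phi \<delta> F) t" "path_last t = Sym (last (La # u)) q" by (auto simp: PP_def)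
  have vd: "is_path (D_phi \<delta> F) (path_ext t Mm (if q \<in> F then DolY else DolX))"
    by (rule ext_sym_valid[OF t]) (simp add: set_symdist)
  have c: "ennreal (cvr u q) \<le> dd (s1_word_dollar u, path_ext t Mm (if q \<in> F then DolY else DolX))"
    by (rule lower_dol[OF vd]) simp
  have th: "ennreal (2/3) * kk = ennreal (1/3) * kk + ennreal (1/3) * kk"
  proof -
    have "ennreal (1/3) + ennreal (1/3) = ennreal (2/3)" by (subst ennreal_plus[symmetric]) simp_all
    then show ?thesis by (simp only: distrib_right[symmetric])
  qed
  have "VV u q = ennreal (1/3) * ennreal (cvr u q)
   + ennreal (1/3) * (\<Sum>x\<in>UNIV. ennreal (pmf (\<delta> q La) x) * VV (u @ [La]) x)
   + ennreal (1/3) * (\<Sum>x\<in>UNIV. ennreal (pmf (\<delta> q Lb) x) * VV (u @ [Lb]) x)" by (rule V_rec)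
  also have "\<dots> \<le> ennreal (1/3) * dd (s1_word_dollar u, path_ext t Mm (if q \<in> F then DolY else DolX))
   + ennreal (1/3) * ((\<Sum>x\<in>UNIV. ennreal (pmf (\<delta> q La) x) * dd (p1 (u @ [La]), path_ext t Mm (Sym La x))) + kk)
   + ennreal (1/3) * ((\<Sum>x\<in>UNIV. ennreal (pmf (\<delta> q Lb) x) * dd (p1 (u @ [Lb]), path_ext t Mm (Sym Lb x))) + kk)"
  proof (rule add_mono[OF add_mono])
    show "ennreal (1/3) * ennreal (cvr u q) \<le> ennreal (1/3) * dd (s1_word_dollar u, path_ext t Mm (if q \<in> F then DolY else DolX))"
      by (rule mult_left_mono[OF c]) simp
    show "ennreal (1/3) * (\<Sum>x\<in>UNIV. ennreal (pmf (\<delta> q La) x) * VV (u @ [La]) x) \<le> ennreal (1/3) * ((\<Sum>x\<in>UNIV. ennreal (pmf (\<delta> q La) x) * dd (p1 (u @ [La]), path_ext t Mm (Sym La x))) + kk)"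
      by (rule mult_left_mono[OF sum_bound[OF t]]) simp
    show "ennreal (1/3) * (\<Sum>x\<in>UNIV. ennreal (pmf (\<delta> q Lb) x) * VV (u @ [Lb]) x) \<le> ennreal (1/3) * ((\<Sum>x\<in>UNIV. ennreal (pmf (\<delta> q Lb) x) * dd (p1 (u @ [Lb]), path_ext t Mm (Sym Lb x))) + kk)"
      by (rule mult_left_mono[OF sum_bound[OF t]]) simp
  qed
  also have "\<dots> = dd (p1 u, t) + ennreal (2/3) * kk"
    unfolding dd_R1[OF t refl] th by (simp only: distrib_left add_ac)
  finally show ?thesis .
qed

lemma kk_zero: "kk = 0"
proof -
  have k1: "kk \<le> 1" unfolding kk_def
  proof (rule SUP_least)
    fix x assume "x \<in> PP"
    have "VV (fst x) (snd (snd x)) - dd (p1 (fst x), fst (snd x)) \<le> VV (fst x) (snd (snd x))"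
      by (rule diff_le_self_ennreal)
    also have "\<dots> \<le> 1" by (rule VV_le1)
    finally show "VV (fst x) (snd (snd x)) - dd (p1 (fst x), fst (snd x)) \<le> 1" .
  qed
  have k2: "kk \<le> ennreal (2/3) * kk"
  proof (subst (1) kk_def, rule SUP_least)
    fix x assume x: "x \<in> PP"
    obtain u t q where xx: "x = (u, t, q)" by (cases x) auto
    have "VV u q \<le> dd (p1 u, t) + ennreal (2/3) * kk" using contract x xx by simp
    moreover have "VV u q \<noteq> top" using VV_le1[of u q] by (auto simp: top_unique)
    ultimately have "VV u q - dd (p1 u, t) \<le> ennreal (2/3) * kk" unfolding ennreal_minus_le_iff by blast
    then show "VV (fst x) (snd (snd x)) - dd (p1 (fst x), fst (snd x)) \<le> ennreal (2 / 3) * kk" by (simp add: xx)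
  qed
  have "kk \<noteq> top" using k1 by (auto simp: top_unique)
  then obtain r where r: "kk = ennreal r" "r \<ge> 0" by (cases kk) auto
  have m: "ennreal (2/3) * ennreal r = ennreal (2/3 * r)" by (rule ennreal_mult[symmetric]) (simp_all add: r)
  have "ennreal r \<le> ennreal (2/3 * r)" using k2 unfolding r(1) m .
  then have "r \<le> 2/3 * r" using r(2) by (subst (asm) ennreal_le_iff) simp_all
  then have "r = 0" using r by simp
  then show ?thesis using r by simp
qed

lemma VV_le_dd: "(u, t, q) \<in> PP \<Longrightarrow> VV u q \<le> dd (p1 u, t)"
  using VV_le_dd_kk kk_zero by fastforce

lemma dd_start: "dd ((A1, []), (Sym La q0, [])) = VV [] q0"
proof (rule antisym)
  have vt: "is_path (D_phi \<delta> F) (Sym La q0, [])" by (rule is_path_Nil)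
  have "dd (p1 [], (Sym La q0, [])) \<le> EE (p1 [], (Sym La q0, []))"
    by (rule le_funD[OF dd_le_EE])
  also have "\<dots> = VV [] q0" by (rule EE_p1[OF vt]) (simp_all add: path_last_def)
  finally show "dd ((A1, []), (Sym La q0, [])) \<le> VV [] q0" by (simp add: p1_def)
  have "((([]::letter list), (Sym La q0, []), q0) \<in> PP)" using vt by (simp add: PP_def path_last_def)
  from VV_le_dd[OF this] show "VV [] q0 \<le> dd ((A1, []), (Sym La q0, []))" by (simp add: p1_def)
qed

end



context mdp begin

lemma real_id: "(\<Sum>q'\<in>UNIV. pmf (delta_word \<delta> q0 w) q' * cvr w q')
   = (1 - PA_Pr q0 \<delta> F w) * pmf (\<alpha> (s1_word_dollar w)) My + PA_Pr q0 \<delta> F w * pmf (\<alpha> (s1_word_dollar w)) Mx"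
proof -
  let ?M = "delta_word \<delta> q0 w"
  have tot: "(\<Sum>q'\<in>UNIV. pmf ?M q') = 1" by (rule sum_pmf_eq_1) auto
  have split: "(\<Sum>q'\<in>UNIV. g q') = (\<Sum>q'\<in>F. g q') + (\<Sum>q'\<in>UNIV - F. g q')" for g :: "'q \<Rightarrow> real"
    by (metis Diff_partition add.commute finite sum.subset_diff top_greatest)
  have "(\<Sum>q'\<in>UNIV. pmf ?M q' * cvr w q') = (\<Sum>q'\<in>F. pmf ?M q' * cvr w q') + (\<Sum>q'\<in>UNIV - F. pmf ?M q' * cvr w q')"
    by (rule split)
  also have "(\<Sum>q'\<in>F. pmf ?M q' * cvr w q') = (\<Sum>q'\<in>F. pmf ?M q') * pmf (\<alpha> (s1_word_dollar w)) Mx"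
    by (simp add: cvr_def sum_distrib_right)
  also have "(\<Sum>q'\<in>UNIV - F. pmf ?M q' * cvr w q') = (\<Sum>q'\<in>UNIV - F. pmf ?M q') * pmf (\<alpha> (s1_word_dollar w)) My"
    by (simp add: cvr_def sum_distrib_right)
  also have "(\<Sum>q'\<in>UNIV - F. pmf ?M q') = 1 - (\<Sum>q'\<in>F. pmf ?M q')" using split[of "pmf ?M"] tot by simp
  finally show ?thesis by (simp add: PA_Pr_def)
qed

lemma Vt_eq: "Vt \<delta> (\<lambda>u q. ennreal (cvr u q)) [] q0 w =
   ennreal ((1 / 3 ^ (length w + 1)) *
      ((1 - PA_Pr q0 \<delta> F w) * pmf (\<alpha> (s1_word_dollar w)) My + PA_Pr q0 \<delta> F w * pmf (\<alpha> (s1_word_dollar w)) Mx))"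
proof -
  have "(\<Sum>q'\<in>UNIV. ennreal (pmf (delta_word \<delta> q0 w) q') * ennreal (cvr w q'))
      = (\<Sum>q'\<in>UNIV. ennreal (pmf (delta_word \<delta> q0 w) q' * cvr w q'))"
    by (rule sum.cong) (simp_all add: ennreal_mult cvr_def)
  also have "\<dots> = ennreal (\<Sum>q'\<in>UNIV. pmf (delta_word \<delta> q0 w) q' * cvr w q')"
    by (rule sum_ennreal) (simp add: cvr_def)
  finally have "Vt \<delta> (\<lambda>u q. ennreal (cvr u q)) [] q0 w = ennreal (1 / 3 ^ (length w + 1)) * ennreal (\<Sum>q'\<in>UNIV. pmf (delta_word \<delta> q0 w) q' * cvr w q')"
    by (simp add: Vt_def)
  also have "\<dots> = ennreal ((1 / 3 ^ (length w + 1)) * (\<Sum>q'\<in>UNIV. pmf (delta_word \<delta> q0 w) q' * cvr w q'))"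
    by (rule ennreal_mult[symmetric]) (simp_all add: cvr_def sum_nonneg)
  finally show ?thesis by (simp only: real_id)
qed

lemma final_eq: "bisim_dist tau lbl (A1, []) (Sym La q0, [])
   = (\<Sum>\<^sub>\<infinity> w :: letter list.
            ennreal ((1 / 3 ^ (length w + 1)) *
              ((1 - PA_Pr q0 \<delta> F w) * pmf (\<alpha> (s1_word_dollar w)) My
               + PA_Pr q0 \<delta> F w * pmf (\<alpha> (s1_word_dollar w)) Mx)))"
  unfolding bisim_dist_def dd_start V_def Vt_eq ..

end

theorem mainTheorem6:
  fixes q0 :: "'q::finite"
    and \<delta> :: "'q \<Rightarrow> letter \<Rightarrow> 'q pmf"
    and F :: "'q set"
    and \<alpha> :: "('q dstate, act) path \<Rightarrow> act pmf"
  assumes "q0 \<notin> F"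
    and "is_strategy (D_phi \<delta> F) \<alpha>"
  shows "bisim_dist (strat_tau (D_phi \<delta> F) \<alpha>) (strat_label D_label)
            (A1, []) (Sym La q0, [])
       = (\<Sum>\<^sub>\<infinity> w :: letter list.
            ennreal ((1 / 3 ^ (length w + 1)) *
              ((1 - PA_Pr q0 \<delta> F w) * pmf (\<alpha> (s1_word_dollar w)) My
               + PA_Pr q0 \<delta> F w * pmf (\<alpha> (s1_word_dollar w)) Mx)))"
proof -
  interpret mdp \<delta> F \<alpha> by unfold_locales (rule assms(2))
  show ?thesis by (rule final_eq)
qed



end
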